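(* Let $\mathcal{B}=(T,\bowtie,\ell)$ be a block and $\mathcal S$ any valid schedule of $\mathcal{B}$. Then there exists a legal partition $(B_1,\dots,B_k)$ of $T$ such that the schedule $\mathcal S'=\mathrm{LevelSchedule}(B_1,\dots,B_k)$ is equivalent to $\mathcal S$ and $\mathrm{Lt}_\ell(\mathcal S')\le \mathrm{Lt}_\ell(\mathcal S)$.
   Context: A block consists of a finite set $T$ of transactions, a conflict relation $\bowtie$, and a length function $\ell:T\to\mathbb{N}_{>0}$. Each transaction is deterministic and has a read-set $R(tx)$ and a write-set $W(tx)$ of objects of a global state it may read/write; distinct $tx_1,tx_2$ conflict ($tx_1\bowtie tx_2$) if $R(tx_1)\cap W(tx_2)$, $W(tx_1)\cap R(tx_2)$ or $W(tx_1)\cap W(tx_2)$ is nonempty. A schedule is a set $\mathcal S\subseteq T\times T$ with $(T,\mathcal S)$ acyclic; it is valid if every conflicting pair is joined by a directed path in $(T,\mathcal S)$ in one direction or the other. The latency $\mathrm{Lt}_\ell(\mathcal S)$ is the maximum, over all directed simple paths $P$ of $(T,\mathcal S)$ (including single vertices), of $\sum_{v\in P}\ell(v)$. A set is conflict-free if no two of its elements conflict; a legal partition of $T$ is an ordered sequence of pairwise disjoint conflict-free sets with union $T$. $\mathrm{LevelSchedule}(B_1,\dots,B_k)$: set $B_0=\emptyset$, $\mathcal S=\emptyset$; for $i=1,\dots,k$ and, for each $i$, for $j=i-1,\dots,0$ (decreasing): let $E=\{(u,v)\in B_j\times B_i: u\bowtie v\}$, let $P$ be the set of pairs $(x,y)$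 with a directed path from $x$ to $y$ in the current $(T,\mathcal S)$, and set $\mathcal S\leftarrow\mathcal S\cup(E\setminus P)$; output $\mathcal S$. The scheduler $GBR$ executes a schedule by running each transaction $tx$ in its own thread, which waits until all $tx'$ with $(tx',tx)\in\mathcal S$ have finished, then reads the latest versions of $R(tx)$, executes, writes $W(tx)$, emits its result and signals its out-neighbours. Two schedules are equivalent if for every initial global state, all executions of $GBR$ on either schedule produce the same result for every transaction and the same final global state. *)

theory Defs
  imports Main
begin

(* A block: finite set T of transactions ('tx); each tx has a read set R tx and a
   write set W tx of objects ('o) of a global state ('o \<Rightarrow> 'v).  Its deterministic
   behaviour is given by res tx (the result it emits, from the state it reads) and
   wr tx (the values it writes, from the state it reads); only the values of
   wr tx on W tx are used. *)

definition conflict :: "('tx \<Rightarrow> 'o set) \<Rightarrow> ('tx \<Rightarrow> 'o set) \<Rightarrow> 'tx \<Rightarrow> 'tx \<Rightarrow> bool" where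
  "conflict R W a b \<longleftrightarrow> a \<noteq> b \<and>
     (R a \<inter> W b \<noteq> {} \<or> W a \<inter> R b \<noteq> {} \<or> W a \<inter> W b \<noteq> {})"

definition wf_block :: "'tx set \<Rightarrow> ('tx \<Rightarrow> 'o set) \<Rightarrow> ('tx \<Rightarrow> 'o set)
    \<Rightarrow> ('tx \<Rightarrow> ('o \<Rightarrow> 'v) \<Rightarrow> 'r) \<Rightarrow> ('tx \<Rightarrow> ('o \<Rightarrow> 'v) \<Rightarrow> ('o \<Rightarrow> 'v))
    \<Rightarrow> ('tx \<Rightarrow> nat) \<Rightarrow> bool" where
  "wf_block T R W res wr len \<longleftrightarrow> finite T \<and> (\<forall>t\<in>T. len t > 0) \<and>
     (\<forall>t\<in>T. \<forall>s s'. (\<forall>x\<in>R t. s x = s' x) \<longrightarrow>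
        res t s = res t s' \<and> (\<forall>x\<in>W t. wr t s x = wr t s' x))"

definition is_schedule :: "'tx set \<Rightarrow> ('tx \<times> 'tx) set \<Rightarrow> bool" where
  "is_schedule T S \<longleftrightarrow> S \<subseteq> T \<times> T \<and> acyclic S"

definition valid_schedule :: "'tx set \<Rightarrow> ('tx \<Rightarrow> 'tx \<Rightarrow> bool) \<Rightarrow> ('tx \<times> 'tx) set \<Rightarrow> bool" where
  "valid_schedule T conf S \<longleftrightarrow> is_schedule T S \<and>
     (\<forall>a\<in>T. \<forall>b\<in>T. conf a b \<longrightarrow> (a, b) \<in> S\<^sup>+ \<or> (b, a) \<in> S\<^sup>+)"

definition sched_path :: "'tx set \<Rightarrow> ('tx \<times> 'tx) set \<Rightarrow> 'tx list \<Rightarrow> bool" where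
  "sched_path T S p \<longleftrightarrow> p \<noteq> [] \<and> distinct p \<and> set p \<subseteq> T \<and>
     (\<forall>i. Suc i < length p \<longrightarrow> (p ! i, p ! Suc i) \<in> S)"

definition latency :: "'tx set \<Rightarrow> ('tx \<Rightarrow> nat) \<Rightarrow> ('tx \<times> 'tx) set \<Rightarrow> nat" where
  "latency T len S = Max {sum_list (map len p) | p. sched_path T S p}"

definition conflict_free :: "('tx \<Rightarrow> 'tx \<Rightarrow> bool) \<Rightarrow> 'tx set \<Rightarrow> bool" where
  "conflict_free conf A \<longleftrightarrow> (\<forall>a\<in>A. \<forall>b\<in>A. \<not> conf a b)"

definition legal_partition :: "('tx \<Rightarrow> 'tx \<Rightarrow> bool) \<Rightarrow> 'tx set \<Rightarrow> 'tx set list \<Rightarrow> bool" where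
  "legal_partition conf T Bs \<longleftrightarrow>
     (\<forall>i<length Bs. \<forall>j<length Bs. i \<noteq> j \<longrightarrow> Bs ! i \<inter> Bs ! j = {}) \<and>
     (\<forall>i<length Bs. conflict_free conf (Bs ! i)) \<and>
     \<Union> (set Bs) = T"

definition level_block :: "'tx set list \<Rightarrow> nat \<Rightarrow> 'tx set" where
  "level_block Bs i = (if i = 0 then {} else Bs ! (i - 1))"

definition level_step :: "('tx \<Rightarrow> 'tx \<Rightarrow> bool) \<Rightarrow> 'tx set list \<Rightarrow> nat \<Rightarrow> nat
    \<Rightarrow> ('tx \<times> 'tx) set \<Rightarrow> ('tx \<times> 'tx) set" where
  "level_step conf Bs i j S =
     S \<union> ({(u, v). u \<in> level_block Bs j \<and> v \<in> level_block Bs i \<and> conf u v} - S\<^sup>+)"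

(* for i = 1..k, for j = i-1 downto 0 *)
definition LevelSchedule :: "('tx \<Rightarrow> 'tx \<Rightarrow> bool) \<Rightarrow> 'tx set list \<Rightarrow> ('tx \<times> 'tx) set" where
  "LevelSchedule conf Bs =
     fold (\<lambda>i S. fold (\<lambda>j S. level_step conf Bs i j S) (rev [0..<i]) S)
          [1..<length Bs + 1] {}"

(* GBR executions: each transaction's thread reads (a snapshot of the current state),
   later writes; a thread reads only after all its in-neighbours have written. *)
datatype 'tx gbr_event = Rd 'tx | Wr 'tx

definition occurs_before :: "'a list \<Rightarrow> 'a \<Rightarrow> 'a \<Rightarrow> bool" where
  "occurs_before es a b \<longleftrightarrow> (\<exists>i j. i < j \<and> j < length es \<and> es ! i = a \<and> es ! j = b)"

definition gbr_execution :: "'tx set \<Rightarrow> ('tx \<times> 'tx) set \<Rightarrow> 'tx gbr_event list \<Rightarrow> bool" where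
  "gbr_execution T S es \<longleftrightarrow> distinct es \<and> set es = Rd ` T \<union> Wr ` T \<and>
     (\<forall>t\<in>T. occurs_before es (Rd t) (Wr t)) \<and>
     (\<forall>(u, v)\<in>S. occurs_before es (Wr u) (Rd v))"

fun gbr_step :: "('tx \<Rightarrow> 'o set) \<Rightarrow> ('tx \<Rightarrow> ('o \<Rightarrow> 'v) \<Rightarrow> ('o \<Rightarrow> 'v)) \<Rightarrow> 'tx gbr_event
    \<Rightarrow> ('o \<Rightarrow> 'v) \<times> ('tx \<Rightarrow> 'o \<Rightarrow> 'v) \<Rightarrow> ('o \<Rightarrow> 'v) \<times> ('tx \<Rightarrow> 'o \<Rightarrow> 'v)" where
  "gbr_step W wr (Rd t) (s, snap) = (s, snap(t := s))"
| "gbr_step W wr (Wr t) (s, snap) = ((\<lambda>x. if x \<in> W t then wr t (snap t) x else s x), snap)"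

(* returns final global state and, for each transaction, the state it read *)
definition gbr_run :: "('tx \<Rightarrow> 'o set) \<Rightarrow> ('tx \<Rightarrow> ('o \<Rightarrow> 'v) \<Rightarrow> ('o \<Rightarrow> 'v))
    \<Rightarrow> 'tx gbr_event list \<Rightarrow> ('o \<Rightarrow> 'v) \<Rightarrow> ('o \<Rightarrow> 'v) \<times> ('tx \<Rightarrow> 'o \<Rightarrow> 'v)" where
  "gbr_run W wr es s0 = fold (gbr_step W wr) es (s0, \<lambda>_. s0)"

definition gbr_result :: "('tx \<Rightarrow> 'o set) \<Rightarrow> ('tx \<Rightarrow> ('o \<Rightarrow> 'v) \<Rightarrow> 'r)
    \<Rightarrow> ('tx \<Rightarrow> ('o \<Rightarrow> 'v) \<Rightarrow> ('o \<Rightarrow> 'v)) \<Rightarrow> 'tx gbr_event list \<Rightarrow> ('o \<Rightarrow> 'v) \<Rightarrow> 'tx \<Rightarrow> 'r" where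
  "gbr_result W res wr es s0 t = res t (snd (gbr_run W wr es s0) t)"

definition gbr_final :: "('tx \<Rightarrow> 'o set) \<Rightarrow> ('tx \<Rightarrow> ('o \<Rightarrow> 'v) \<Rightarrow> ('o \<Rightarrow> 'v))
    \<Rightarrow> 'tx gbr_event list \<Rightarrow> ('o \<Rightarrow> 'v) \<Rightarrow> ('o \<Rightarrow> 'v)" where
  "gbr_final W wr es s0 = fst (gbr_run W wr es s0)"

definition equivalent_schedules :: "'tx set \<Rightarrow> ('tx \<Rightarrow> 'o set) \<Rightarrow> ('tx \<Rightarrow> ('o \<Rightarrow> 'v) \<Rightarrow> 'r)
    \<Rightarrow> ('tx \<Rightarrow> ('o \<Rightarrow> 'v) \<Rightarrow> ('o \<Rightarrow> 'v)) \<Rightarrow> ('tx \<times> 'tx) set \<Rightarrow> ('tx \<times> 'tx) set \<Rightarrow> bool" where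
  "equivalent_schedules T W res wr S1 S2 \<longleftrightarrow>
     (\<forall>s0 es1 es2. gbr_execution T S1 es1 \<longrightarrow> gbr_execution T S2 es2 \<longrightarrow>
        (\<forall>t\<in>T. gbr_result W res wr es1 s0 t = gbr_result W res wr es2 s0 t) \<and>
        gbr_final W wr es1 s0 = gbr_final W wr es2 s0)"

end

theory Submission
  imports Defs
begin


definition pos :: "'a list \<Rightarrow> 'a \<Rightarrow> nat" where
  "pos xs a = length (takeWhile (\<lambda>y. y \<noteq> a) xs)"

lemma pos_lt: "a \<in> set xs \<Longrightarrow> pos xs a < length xs"
  unfolding pos_def by (induction xs) auto

lemma pos_nth: "a \<in> set xs \<Longrightarrow> xs ! pos xs a = a"
  unfolding pos_def by (induction xs) auto

lemma pos_of_nth: "distinct xs \<Longrightarrow> i < length xs \<Longrightarrow> pos xs (xs ! i) = i"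
proof -
  assume d: "distinct xs" and i: "i < length xs"
  have m: "xs ! i \<in> set xs" using i by simp
  have "xs ! pos xs (xs ! i) = xs ! i" using pos_nth[OF m] .
  then show ?thesis using nth_eq_iff_index_eq[OF d pos_lt[OF m] i] by simp
qed

lemma ob_pos:
  assumes d: "distinct es"
  shows "occurs_before es a b \<longleftrightarrow> a \<in> set es \<and> b \<in> set es \<and> pos es a < pos es b"
proof
  assume "occurs_before es a b"
  then obtain i j where ij: "i < j" "j < length es" "es ! i = a" "es ! j = b"
    unfolding occurs_before_def by blast
  have il: "i < length es" using ij by simp
  have "pos es a = i" using pos_of_nth[OF d il] ij(3) by simp
  moreover have "pos es b = j" using pos_of_nth[OF d ij(2)] ij(4) by simp
  moreover have "a \<in> set es" using nth_mem[OF il] ij(3) by simp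
  moreover have "b \<in> set es" using nth_mem[OF ij(2)] ij(4) by simp
  ultimately show "a \<in> set es \<and> b \<in> set es \<and> pos es a < pos es b" using ij(1) by simp
next
  assume a: "a \<in> set es \<and> b \<in> set es \<and> pos es a < pos es b"
  have "es ! pos es a = a" "es ! pos es b = b" "pos es b < length es"
    using a pos_nth[of a es] pos_nth[of b es] pos_lt[of b es] by simp_all
  then show "occurs_before es a b" unfolding occurs_before_def
    using a by (intro exI[of _ "pos es a"] exI[of _ "pos es b"]) simp
qed

lemma ob_trans: "distinct es \<Longrightarrow> occurs_before es a b \<Longrightarrow> occurs_before es b c \<Longrightarrow> occurs_before es a c"
  by (simp add: ob_pos)

lemma ob_irrefl: "distinct es \<Longrightarrow> \<not> occurs_before es a a"
  by (simp add: ob_pos)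

lemma ob_split: "distinct es \<Longrightarrow> es = p @ a # q \<Longrightarrow> b \<in> set p \<Longrightarrow> occurs_before es b a"
proof -
  assume e: "es = p @ a # q" and b: "b \<in> set p"
  then obtain k where k: "k < length p" "p ! k = b" by (metis in_set_conv_nth)
  have "es ! length p = a" using e by simp
  moreover have "es ! k = b" using e k by (simp add: nth_append)
  moreover have "length p < length es" using e by simp
  ultimately show ?thesis unfolding occurs_before_def using k by blast
qed

lemma ob_split3: "distinct es \<Longrightarrow> es = p @ a # q \<Longrightarrow> b \<in> set q \<Longrightarrow> occurs_before es a b"
proof -
  assume e: "es = p @ a # q" and b: "b \<in> set q"
  then obtain k where k: "k < length q" "q ! k = b" by (metis in_set_conv_nth)
  have "es ! length p = a" using e by simp
  moreover have "es ! (Suc (length p + k)) = b" using e k by (simp add: nth_append)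
  moreover have "Suc (length p + k) < length es" using e k by simp
  ultimately show ?thesis unfolding occurs_before_def
    by (intro exI[of _ "length p"] exI[of _ "Suc (length p + k)"]) simp
qed

lemma ob_split2: "distinct es \<Longrightarrow> es = p @ a # q \<Longrightarrow> occurs_before es b a \<Longrightarrow> b \<in> set p"
proof -
  assume d: "distinct es" and e: "es = p @ a # q" and o: "occurs_before es b a"
  from o obtain i j where ij: "i < j" "j < length es" "es ! i = b" "es ! j = a"
    unfolding occurs_before_def by blast
  have lp: "length p < length es" "es ! length p = a" using e by auto
  have "j = length p" using nth_eq_iff_index_eq[OF d ij(2) lp(1)] ij(4) lp(2) by simp
  then have "i < length p" "p ! i = b" using ij e by (auto simp: nth_append)
  then show ?thesis by (auto simp: in_set_conv_nth)
qed




lemma nowr: "(\<forall>u. Wr u \<in> set xs \<longrightarrow> x \<notin> W u) \<Longrightarrow> fst (fold (gbr_step W wr) xs \<sigma>) x = fst \<sigma> x"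
proof (induction xs arbitrary: \<sigma>)
  case Nil then show ?case by simp
next
  case (Cons e xs)
  obtain s sn where s: "\<sigma> = (s, sn)" by force
  show ?case
  proof (cases e)
    case (Rd t) then show ?thesis using Cons s by simp
  next
    case (Wr t) then show ?thesis using Cons s by simp
  qed
qed

lemma lastwr: "x \<in> W u \<Longrightarrow> (\<forall>u'. Wr u' \<in> set b \<longrightarrow> x \<notin> W u') \<Longrightarrow>
  fst (fold (gbr_step W wr) (a @ Wr u # b) \<sigma>) x = wr u (snd (fold (gbr_step W wr) a \<sigma>) u) x"
proof -
  assume x: "x \<in> W u" and b: "\<forall>u'. Wr u' \<in> set b \<longrightarrow> x \<notin> W u'"
  obtain s sn where s: "fold (gbr_step W wr) a \<sigma> = (s, sn)" by force
  have "fst (fold (gbr_step W wr) (a @ Wr u # b) \<sigma>) x = fst (fold (gbr_step W wr) b (gbr_step W wr (Wr u) (s, sn))) x"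
    using s by simp
  also have "\<dots> = fst (gbr_step W wr (Wr u) (s, sn)) x" by (rule nowr[OF b])
  finally show ?thesis using x s by simp
qed

lemma snap_keep: "Rd t \<notin> set xs \<Longrightarrow> snd (fold (gbr_step W wr) xs \<sigma>) t = snd \<sigma> t"
proof (induction xs arbitrary: \<sigma>)
  case Nil then show ?case by simp
next
  case (Cons e xs)
  obtain s sn where s: "\<sigma> = (s, sn)" by force
  show ?case
  proof (cases e)
    case (Rd t') then show ?thesis using Cons s by simp
  next
    case (Wr t') then show ?thesis using Cons s by simp
  qed
qed

lemma snap_at: "Rd t \<notin> set q \<Longrightarrow> snd (fold (gbr_step W wr) (p @ Rd t # q) \<sigma>) t = fst (fold (gbr_step W wr) p \<sigma>)"
proof -
  assume q: "Rd t \<notin> set q"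
  obtain s sn where s: "fold (gbr_step W wr) p \<sigma> = (s, sn)" by force
  show ?thesis using snap_keep[OF q, of W wr "gbr_step W wr (Rd t) (s, sn)"] s by simp
qed

definition snapF :: "('tx \<Rightarrow> 'o set) \<Rightarrow> ('tx \<Rightarrow> ('o \<Rightarrow> 'v) \<Rightarrow> ('o \<Rightarrow> 'v)) \<Rightarrow> 'tx gbr_event list \<Rightarrow> ('o \<Rightarrow> 'v) \<Rightarrow> 'tx \<Rightarrow> 'o \<Rightarrow> 'v" where
  "snapF W wr es s0 t = snd (fold (gbr_step W wr) es (s0, \<lambda>_. s0)) t"

lemma snapF_prefix: "distinct es \<Longrightarrow> es = a @ r \<Longrightarrow> Rd u \<in> set a \<Longrightarrow>
   snd (fold (gbr_step W wr) a \<sigma>) u = snd (fold (gbr_step W wr) es \<sigma>) u"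
proof -
  assume d: "distinct es" and e: "es = a @ r" and u: "Rd u \<in> set a"
  obtain a1 a2 where a: "a = a1 @ Rd u # a2" using split_list[OF u] by blast
  have n1: "Rd u \<notin> set a2" and n2: "Rd u \<notin> set (a2 @ r)" using d e a by auto
  show ?thesis using snap_at[OF n1, of W wr a1 \<sigma>] snap_at[OF n2, of W wr a1 \<sigma>] a e by simp
qed

lemma exec_wr_T: "gbr_execution T S es \<Longrightarrow> Wr u \<in> set es \<Longrightarrow> u \<in> T"
  unfolding gbr_execution_def by auto

lemma exec_rd_T: "gbr_execution T S es \<Longrightarrow> Rd u \<in> set es \<Longrightarrow> u \<in> T"
  unfolding gbr_execution_def by auto

lemma VAL:
  assumes ex: "gbr_execution T S es" and e: "es = p @ q" and u0: "Wr u0 \<in> set p" "x \<in> W u0"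
    and last: "\<forall>u'. Wr u' \<in> set p \<longrightarrow> x \<in> W u' \<longrightarrow> u' = u0 \<or> occurs_before es (Wr u') (Wr u0)"
  shows "fst (fold (gbr_step W wr) p (s0, \<lambda>_. s0)) x = wr u0 (snapF W wr es s0 u0) x"
proof -
  have d: "distinct es" using ex unfolding gbr_execution_def by simp
  obtain a b where p: "p = a @ Wr u0 # b" using split_list[OF u0(1)] by blast
  have es2: "es = a @ Wr u0 # (b @ q)" using e p by simp
  have nb: "\<forall>u'. Wr u' \<in> set b \<longrightarrow> x \<notin> W u'"
  proof (intro allI impI notI)
    fix u' assume ub: "Wr u' \<in> set b" and xu: "x \<in> W u'"
    have o1: "occurs_before es (Wr u0) (Wr u')" using ob_split3[OF d es2] ub by simp
    have ne: "u' \<noteq> u0" using d es2 ub by auto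
    have "Wr u' \<in> set p" using p ub by simp
    then have "occurs_before es (Wr u') (Wr u0)" using last xu ne by blast
    then have "occurs_before es (Wr u0) (Wr u0)" using ob_trans[OF d o1] by simp
    then show False using ob_irrefl[OF d] by simp
  qed
  have "u0 \<in> T" using exec_wr_T[OF ex] u0 e by simp
  then have "occurs_before es (Rd u0) (Wr u0)" using ex unfolding gbr_execution_def by blast
  then have ra: "Rd u0 \<in> set a" using ob_split2[OF d es2] by blast
  have "fst (fold (gbr_step W wr) p (s0, \<lambda>_. s0)) x = wr u0 (snd (fold (gbr_step W wr) a (s0, \<lambda>_. s0)) u0) x"
    using lastwr[OF u0(2) nb] p by simp
  also have "\<dots> = wr u0 (snapF W wr es s0 u0) x"
    unfolding snapF_def using snapF_prefix[OF d es2 ra, of W wr "(s0, \<lambda>_. s0)"] by simp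
  finally show ?thesis .
qed

definition WB :: "'tx set \<Rightarrow> ('tx \<Rightarrow> 'o set) \<Rightarrow> 'tx gbr_event list \<Rightarrow> 'o \<Rightarrow> 'tx \<Rightarrow> 'tx set" where
  "WB T W es x t = {u \<in> T. x \<in> W u \<and> occurs_before es (Wr u) (Rd t)}"

lemma exec_ob_rw: "gbr_execution T S es \<Longrightarrow> u \<in> T \<Longrightarrow> occurs_before es (Rd u) (Wr u)"
  unfolding gbr_execution_def by simp

lemma snap_split:
  assumes ex: "gbr_execution T S es" and t: "t \<in> T"
  obtains p q where "es = p @ Rd t # q" "snapF W wr es s0 t = fst (fold (gbr_step W wr) p (s0, \<lambda>_. s0))"
    "\<And>u. Wr u \<in> set p \<longleftrightarrow> occurs_before es (Wr u) (Rd t)"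
proof -
  have d: "distinct es" using ex unfolding gbr_execution_def by simp
  have "Rd t \<in> set es" using ex t unfolding gbr_execution_def by simp
  then obtain p q where e: "es = p @ Rd t # q" using split_list by metis
  have nq: "Rd t \<notin> set q" using d e by simp
  have 1: "snapF W wr es s0 t = fst (fold (gbr_step W wr) p (s0, \<lambda>_. s0))"
    unfolding snapF_def e by (rule snap_at[OF nq])
  have 2: "Wr u \<in> set p \<longleftrightarrow> occurs_before es (Wr u) (Rd t)" for u
  proof
    assume "Wr u \<in> set p" then show "occurs_before es (Wr u) (Rd t)" by (rule ob_split[OF d e])
  next
    assume "occurs_before es (Wr u) (Rd t)" then show "Wr u \<in> set p" by (rule ob_split2[OF d e])
  qed
  show ?thesis by (rule that[OF e 1 2])
qed

lemma snap_char1: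
  assumes ex: "gbr_execution T S es" and t: "t \<in> T" and U: "WB T W es x t = {}"
  shows "snapF W wr es s0 t x = s0 x"
proof -
  obtain p q where e: "es = p @ Rd t # q" and sn: "snapF W wr es s0 t = fst (fold (gbr_step W wr) p (s0, \<lambda>_. s0))"
    and w: "\<And>u. Wr u \<in> set p \<longleftrightarrow> occurs_before es (Wr u) (Rd t)"
    using snap_split[OF ex t] by blast
  have "\<forall>u. Wr u \<in> set p \<longrightarrow> x \<notin> W u"
  proof (intro allI impI notI)
    fix u assume a: "Wr u \<in> set p" "x \<in> W u"
    then have "u \<in> T" using exec_wr_T[OF ex] e by auto
    then show False using U a w unfolding WB_def by blast
  qed
  then show ?thesis using sn nowr by (metis fst_conv)
qed

lemma snap_char2:
  assumes ex: "gbr_execution T S es" and t: "t \<in> T" and u0: "u0 \<in> WB T W es x t"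
    and mx: "\<forall>u\<in>WB T W es x t. u \<noteq> u0 \<longrightarrow> occurs_before es (Wr u) (Rd u0)"
  shows "snapF W wr es s0 t x = wr u0 (snapF W wr es s0 u0) x"
proof -
  have d: "distinct es" using ex unfolding gbr_execution_def by simp
  obtain p q where e: "es = p @ Rd t # q" and sn: "snapF W wr es s0 t = fst (fold (gbr_step W wr) p (s0, \<lambda>_. s0))"
    and w: "\<And>u. Wr u \<in> set p \<longleftrightarrow> occurs_before es (Wr u) (Rd t)"
    using snap_split[OF ex t] by blast
  have u0T: "u0 \<in> T" using u0 unfolding WB_def by simp
  have "fst (fold (gbr_step W wr) p (s0, \<lambda>_. s0)) x = wr u0 (snapF W wr es s0 u0) x"
  proof (rule VAL[OF ex])
    show "es = p @ (Rd t # q)" using e .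
    show "Wr u0 \<in> set p" using u0 w unfolding WB_def by simp
    show "x \<in> W u0" using u0 unfolding WB_def by simp
    show "\<forall>u'. Wr u' \<in> set p \<longrightarrow> x \<in> W u' \<longrightarrow> u' = u0 \<or> occurs_before es (Wr u') (Wr u0)"
    proof (intro allI impI)
      fix u' assume a: "Wr u' \<in> set p" "x \<in> W u'"
      then have "u' \<in> T" using exec_wr_T[OF ex] e by auto
      then have "u' \<in> WB T W es x t" using a w unfolding WB_def by simp
      show "u' = u0 \<or> occurs_before es (Wr u') (Wr u0)"
      proof (cases "u' = u0")
        case False
        then have "occurs_before es (Wr u') (Rd u0)" using mx \<open>u' \<in> WB T W es x t\<close> by blast
        then show ?thesis using ob_trans[OF d _ exec_ob_rw[OF ex u0T]] by simp
      qed simp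
    qed
  qed
  then show ?thesis using sn by simp
qed

lemma final_char1:
  assumes ex: "gbr_execution T S es" and U: "\<forall>u\<in>T. x \<notin> W u"
  shows "gbr_final W wr es s0 x = s0 x"
proof -
  have "\<forall>u. Wr u \<in> set es \<longrightarrow> x \<notin> W u" using U exec_wr_T[OF ex] by blast
  then show ?thesis unfolding gbr_final_def gbr_run_def using nowr by (metis fst_conv)
qed

lemma final_char2:
  assumes ex: "gbr_execution T S es" and u0: "u0 \<in> T" "x \<in> W u0"
    and mx: "\<forall>u\<in>T. x \<in> W u \<longrightarrow> u \<noteq> u0 \<longrightarrow> occurs_before es (Wr u) (Rd u0)"
  shows "gbr_final W wr es s0 x = wr u0 (snapF W wr es s0 u0) x"
  unfolding gbr_final_def gbr_run_def
proof (rule VAL[OF ex])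
  have d: "distinct es" using ex unfolding gbr_execution_def by simp
  show "es = es @ []" by simp
  show "Wr u0 \<in> set es" using ex u0 unfolding gbr_execution_def by simp
  show "x \<in> W u0" using u0 by simp
  show "\<forall>u'. Wr u' \<in> set es \<longrightarrow> x \<in> W u' \<longrightarrow> u' = u0 \<or> occurs_before es (Wr u') (Wr u0)"
  proof (intro allI impI)
    fix u' assume a: "Wr u' \<in> set es" "x \<in> W u'"
    have uT: "u' \<in> T" using exec_wr_T[OF ex a(1)] .
    show "u' = u0 \<or> occurs_before es (Wr u') (Wr u0)"
    proof (cases "u' = u0")
      case False
      then have "occurs_before es (Wr u') (Rd u0)" using mx uT a(2) by blast
      then show ?thesis using ob_trans[OF d _ exec_ob_rw[OF ex u0(1)]] by simp
    qed simp
  qed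
qed



lemma ob_of_trancl:
  assumes ex: "gbr_execution T S es" and ST: "S \<subseteq> T \<times> T" and ab: "(a, b) \<in> S\<^sup>+"
  shows "occurs_before es (Wr a) (Rd b)"
  using ab
proof (induction rule: trancl_induct)
  case (base y)
  then show ?case using ex unfolding gbr_execution_def by blast
next
  case (step y z)
  have d: "distinct es" using ex unfolding gbr_execution_def by simp
  have yT: "y \<in> T" using step(2) ST by blast
  have 1: "occurs_before es (Wr y) (Rd z)" using step(2) ex unfolding gbr_execution_def by blast
  have 2: "occurs_before es (Rd y) (Wr y)" using exec_ob_rw[OF ex yT] .
  have "occurs_before es (Wr a) (Wr y)" using ob_trans[OF d step(3) 2] .
  then show ?case using ob_trans[OF d _ 1] by simp
qed

lemma no_both:
  assumes ex: "gbr_execution T S es" and aT: "a \<in> T" and bT: "b \<in> T"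
    and o1: "occurs_before es (Wr a) (Rd b)" and o2: "occurs_before es (Wr b) (Rd a)"
  shows False
proof -
  have d: "distinct es" using ex unfolding gbr_execution_def by simp
  have "occurs_before es (Wr a) (Wr b)" using ob_trans[OF d o1 exec_ob_rw[OF ex bT]] .
  then have "occurs_before es (Wr a) (Rd a)" using ob_trans[OF d _ o2] by simp
  then have "occurs_before es (Wr a) (Wr a)" using ob_trans[OF d _ exec_ob_rw[OF ex aT]] by simp
  then show False using ob_irrefl[OF d] by simp
qed

lemma exec_conf_iff:
  assumes v: "valid_schedule T conf S" and ex: "gbr_execution T S es"
    and aT: "a \<in> T" and bT: "b \<in> T" and c: "conf a b"
  shows "occurs_before es (Wr a) (Rd b) \<longleftrightarrow> (a, b) \<in> S\<^sup>+"
proof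
  have ST: "S \<subseteq> T \<times> T" using v unfolding valid_schedule_def is_schedule_def by simp
  assume o: "occurs_before es (Wr a) (Rd b)"
  show "(a, b) \<in> S\<^sup>+"
  proof (rule ccontr)
    assume "(a, b) \<notin> S\<^sup>+"
    then have "(b, a) \<in> S\<^sup>+" using v aT bT c unfolding valid_schedule_def by blast
    then have "occurs_before es (Wr b) (Rd a)" using ob_of_trancl[OF ex ST] by simp
    then show False using no_both[OF ex aT bT o] by simp
  qed
next
  have ST: "S \<subseteq> T \<times> T" using v unfolding valid_schedule_def is_schedule_def by simp
  assume "(a, b) \<in> S\<^sup>+"
  then show "occurs_before es (Wr a) (Rd b)" using ob_of_trancl[OF ex ST] by simp
qed

lemma exec_sep:
  assumes v: "valid_schedule T conf S" and ex: "gbr_execution T S es"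
    and aT: "a \<in> T" and bT: "b \<in> T" and c: "conf a b"
  shows "occurs_before es (Wr a) (Rd b) \<or> occurs_before es (Wr b) (Rd a)"
proof -
  have ST: "S \<subseteq> T \<times> T" using v unfolding valid_schedule_def is_schedule_def by simp
  have "(a, b) \<in> S\<^sup>+ \<or> (b, a) \<in> S\<^sup>+" using v aT bT c unfolding valid_schedule_def by blast
  then show ?thesis using ob_of_trancl[OF ex ST] by blast
qed

lemma maxw:
  assumes v: "valid_schedule T conf S" and ex: "gbr_execution T S es"
    and fin: "finite A" and ne: "A \<noteq> {}" and AT: "A \<subseteq> T"
    and pc: "\<forall>u\<in>A. \<forall>v\<in>A. u \<noteq> v \<longrightarrow> conf u v"
  shows "\<exists>u0\<in>A. \<forall>u\<in>A. u \<noteq> u0 \<longrightarrow> occurs_before es (Wr u) (Rd u0)"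
proof -
  have d: "distinct es" using ex unfolding gbr_execution_def by simp
  define f where "f u = pos es (Wr u)" for u
  have "Max (f ` A) \<in> f ` A" using fin ne by simp
  then obtain u0 where u0: "u0 \<in> A" "f u0 = Max (f ` A)" by auto
  have mx: "f u \<le> f u0" if "u \<in> A" for u using u0(2) fin that by simp
  show ?thesis
  proof (intro bexI[OF _ u0(1)] ballI impI)
    fix u assume uA: "u \<in> A" and ne: "u \<noteq> u0"
    have uT: "u \<in> T" and u0T: "u0 \<in> T" using uA u0(1) AT by auto
    have "conf u u0" using pc uA u0(1) ne by blast
    then have "occurs_before es (Wr u) (Rd u0) \<or> occurs_before es (Wr u0) (Rd u)"
      using exec_sep[OF v ex uT u0T] by simp
    moreover have "\<not> occurs_before es (Wr u0) (Rd u)"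
    proof
      assume "occurs_before es (Wr u0) (Rd u)"
      then have "occurs_before es (Wr u0) (Wr u)" using ob_trans[OF d _ exec_ob_rw[OF ex uT]] by simp
      then have "f u0 < f u" unfolding f_def using ob_pos[OF d] by simp
      then show False using mx[OF uA] by simp
    qed
    ultimately show "occurs_before es (Wr u) (Rd u0)" by simp
  qed
qed



lemma equiv_core:
  assumes wf: "wf_block T R W res wr len"
    and v1: "valid_schedule T (conflict R W) S1" and ex1: "gbr_execution T S1 es1"
    and v2: "valid_schedule T (conflict R W) S2" and ex2: "gbr_execution T S2 es2"
    and agree: "\<forall>a\<in>T. \<forall>b\<in>T. conflict R W a b \<longrightarrow> ((a, b) \<in> S1\<^sup>+ \<longleftrightarrow> (a, b) \<in> S2\<^sup>+)"
  shows "\<forall>t\<in>T. \<forall>x\<in>R t. snapF W wr es1 s0 t x = snapF W wr es2 s0 t x"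
proof -
  have d1: "distinct es1" using ex1 unfolding gbr_execution_def by simp
  have d2: "distinct es2" using ex2 unfolding gbr_execution_def by simp
  have fin: "finite T" using wf unfolding wf_block_def by simp
  have ob12: "occurs_before es1 (Wr a) (Rd b) \<longleftrightarrow> occurs_before es2 (Wr a) (Rd b)"
    if "a \<in> T" "b \<in> T" "conflict R W a b" for a b
    using exec_conf_iff[OF v1 ex1 that] exec_conf_iff[OF v2 ex2 that] agree that by blast
  have wbeq: "WB T W es1 x t = WB T W es2 x t" if tT: "t \<in> T" and xR: "x \<in> R t" for x t
  proof -
    have "occurs_before es1 (Wr u) (Rd t) \<longleftrightarrow> occurs_before es2 (Wr u) (Rd t)"
      if uT: "u \<in> T" and xW: "x \<in> W u" for u
    proof (cases "u = t")
      case True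
      have n1: "\<not> occurs_before es1 (Wr t) (Rd t)"
      proof
        assume "occurs_before es1 (Wr t) (Rd t)"
        then show False using no_both[OF ex1 tT tT] by blast
      qed
      have n2: "\<not> occurs_before es2 (Wr t) (Rd t)"
      proof
        assume "occurs_before es2 (Wr t) (Rd t)"
        then show False using no_both[OF ex2 tT tT] by blast
      qed
      show ?thesis using n1 n2 True by simp
    next
      case False
      have "conflict R W u t" unfolding conflict_def using False xW xR by blast
      then show ?thesis using ob12[OF uT tT] by simp
    qed
    then show ?thesis unfolding WB_def by blast
  qed
  have main: "t \<in> T \<longrightarrow> (\<forall>x\<in>R t. snapF W wr es1 s0 t x = snapF W wr es2 s0 t x)" for t
  proof (induction t rule: measure_induct_rule[where f="\<lambda>t. pos es1 (Rd t)"])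
    case (less t)
    show ?case
    proof (intro impI ballI)
      assume tT: "t \<in> T"
      fix x assume xR: "x \<in> R t"
      have eq: "WB T W es1 x t = WB T W es2 x t" using wbeq[OF tT xR] .
      show "snapF W wr es1 s0 t x = snapF W wr es2 s0 t x"
      proof (cases "WB T W es1 x t = {}")
        case True
        then show ?thesis using snap_char1[OF ex1 tT] snap_char1[OF ex2 tT] eq by metis
      next
        case False
        have finA: "finite (WB T W es1 x t)" using fin unfolding WB_def by simp
        have AT: "WB T W es1 x t \<subseteq> T" unfolding WB_def by blast
        have pc: "\<forall>u\<in>WB T W es1 x t. \<forall>v\<in>WB T W es1 x t. u \<noteq> v \<longrightarrow> conflict R W u v"
          unfolding WB_def conflict_def by blast
        obtain u0 where u0: "u0 \<in> WB T W es1 x t"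
          and mx1: "\<forall>u\<in>WB T W es1 x t. u \<noteq> u0 \<longrightarrow> occurs_before es1 (Wr u) (Rd u0)"
          using maxw[OF v1 ex1 finA False AT pc] by blast
        have u0T: "u0 \<in> T" using u0 unfolding WB_def by simp
        have mx2: "\<forall>u\<in>WB T W es2 x t. u \<noteq> u0 \<longrightarrow> occurs_before es2 (Wr u) (Rd u0)"
        proof (intro ballI impI)
          fix u assume uA: "u \<in> WB T W es2 x t" and ne: "u \<noteq> u0"
          have uA1: "u \<in> WB T W es1 x t" using uA eq by simp
          have uT: "u \<in> T" using uA unfolding WB_def by simp
          have "conflict R W u u0" using pc uA1 u0 ne by blast
          then show "occurs_before es2 (Wr u) (Rd u0)" using ob12[OF uT u0T] mx1 uA1 ne by blast
        qed
        have s1: "snapF W wr es1 s0 t x = wr u0 (snapF W wr es1 s0 u0) x"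
          using snap_char2[OF ex1 tT u0 mx1] .
        have s2: "snapF W wr es2 s0 t x = wr u0 (snapF W wr es2 s0 u0) x"
          using snap_char2[OF ex2 tT _ mx2] u0 eq by simp
        have "occurs_before es1 (Wr u0) (Rd t)" using u0 unfolding WB_def by simp
        then have "occurs_before es1 (Rd u0) (Rd t)"
          using ob_trans[OF d1 exec_ob_rw[OF ex1 u0T]] by simp
        then have "pos es1 (Rd u0) < pos es1 (Rd t)" using ob_pos[OF d1] by simp
        then have ih: "\<forall>y\<in>R u0. snapF W wr es1 s0 u0 y = snapF W wr es2 s0 u0 y"
          using less u0T by blast
        have xW: "x \<in> W u0" using u0 unfolding WB_def by simp
        have "wr u0 (snapF W wr es1 s0 u0) x = wr u0 (snapF W wr es2 s0 u0) x"
          using wf u0T ih xW unfolding wf_block_def by blast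
        then show ?thesis using s1 s2 by simp
      qed
    qed
  qed
  show ?thesis using main by blast
qed



lemma equiv_sched:
  assumes wf: "wf_block T R W res wr len"
    and v1: "valid_schedule T (conflict R W) S1"
    and v2: "valid_schedule T (conflict R W) S2"
    and agree: "\<forall>a\<in>T. \<forall>b\<in>T. conflict R W a b \<longrightarrow> ((a, b) \<in> S1\<^sup>+ \<longleftrightarrow> (a, b) \<in> S2\<^sup>+)"
  shows "equivalent_schedules T W res wr S1 S2"
  unfolding equivalent_schedules_def
proof (intro allI impI conjI ballI)
  fix s0 es1 es2 assume ex1: "gbr_execution T S1 es1" and ex2: "gbr_execution T S2 es2"
  have sn: "\<forall>t\<in>T. \<forall>x\<in>R t. snapF W wr es1 s0 t x = snapF W wr es2 s0 t x"
    using equiv_core[OF wf v1 ex1 v2 ex2 agree] .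
  {
    fix t assume tT: "t \<in> T"
    have "res t (snapF W wr es1 s0 t) = res t (snapF W wr es2 s0 t)"
      using wf tT sn unfolding wf_block_def by blast
    then show "gbr_result W res wr es1 s0 t = gbr_result W res wr es2 s0 t"
      unfolding gbr_result_def gbr_run_def snapF_def by simp
  }
  have fin: "finite T" using wf unfolding wf_block_def by simp
  have d1: "distinct es1" using ex1 unfolding gbr_execution_def by simp
  show "gbr_final W wr es1 s0 = gbr_final W wr es2 s0"
  proof
    fix x
    define A where "A = {u \<in> T. x \<in> W u}"
    show "gbr_final W wr es1 s0 x = gbr_final W wr es2 s0 x"
    proof (cases "A = {}")
      case True
      then have "\<forall>u\<in>T. x \<notin> W u" unfolding A_def by blast
      then show ?thesis using final_char1[OF ex1] final_char1[OF ex2] by metis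
    next
      case False
      have finA: "finite A" using fin unfolding A_def by simp
      have AT: "A \<subseteq> T" unfolding A_def by blast
      have pc: "\<forall>u\<in>A. \<forall>v\<in>A. u \<noteq> v \<longrightarrow> conflict R W u v"
        unfolding A_def conflict_def by blast
      obtain u0 where u0: "u0 \<in> A"
        and mx1: "\<forall>u\<in>A. u \<noteq> u0 \<longrightarrow> occurs_before es1 (Wr u) (Rd u0)"
        using maxw[OF v1 ex1 finA False AT pc] by blast
      have u0T: "u0 \<in> T" and xW: "x \<in> W u0" using u0 unfolding A_def by auto
      have mx1': "\<forall>u\<in>T. x \<in> W u \<longrightarrow> u \<noteq> u0 \<longrightarrow> occurs_before es1 (Wr u) (Rd u0)"
        using mx1 unfolding A_def by blast
      have mx2: "\<forall>u\<in>T. x \<in> W u \<longrightarrow> u \<noteq> u0 \<longrightarrow> occurs_before es2 (Wr u) (Rd u0)"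
      proof (intro ballI impI)
        fix u assume uT: "u \<in> T" and xu: "x \<in> W u" and ne: "u \<noteq> u0"
        have c: "conflict R W u u0" unfolding conflict_def using ne xu xW by blast
        have "occurs_before es1 (Wr u) (Rd u0)" using mx1' uT xu ne by blast
        then show "occurs_before es2 (Wr u) (Rd u0)"
          using exec_conf_iff[OF v1 ex1 uT u0T c] exec_conf_iff[OF v2 ex2 uT u0T c] agree uT u0T c by blast
      qed
      have "wr u0 (snapF W wr es1 s0 u0) x = wr u0 (snapF W wr es2 s0 u0) x"
        using wf u0T sn xW unfolding wf_block_def by blast
      then show ?thesis using final_char2[OF ex1 u0T xW mx1', of wr s0] final_char2[OF ex2 u0T xW mx2, of wr s0] by simp
    qed
  qed
qed



lemma fold_incr: "(\<forall>x\<in>set xs. \<forall>S. S \<subseteq> f x S) \<Longrightarrow> S \<subseteq> fold f xs S"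
proof (induction xs arbitrary: S)
  case Nil then show ?case by simp
next
  case (Cons y ys)
  have "S \<subseteq> f y S" using Cons.prems by simp
  also have "f y S \<subseteq> fold f ys (f y S)" using Cons by simp
  finally show ?case by simp
qed

lemma fold_inv: "P S \<Longrightarrow> (\<forall>x\<in>set xs. \<forall>S. P S \<longrightarrow> P (f x S)) \<Longrightarrow> P (fold f xs S)"
proof (induction xs arbitrary: S)
  case Nil then show ?case by simp
next
  case (Cons y ys)
  have "P (f y S)" using Cons.prems by simp
  then show ?case using Cons by simp
qed

lemma fold_reach:
  assumes "x \<in> set xs" "\<forall>S. Q (f x S)" "\<forall>S S'. Q S \<longrightarrow> S \<subseteq> S' \<longrightarrow> Q S'"
    "\<forall>y\<in>set xs. \<forall>S. S \<subseteq> f y S"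
  shows "Q (fold f xs S)"
  using assms
proof (induction xs arbitrary: S)
  case Nil then show ?case by simp
next
  case (Cons y ys)
  show ?case
  proof (cases "x = y")
    case True
    have q: "Q (f y S)" using Cons.prems(2) True by simp
    have "f y S \<subseteq> fold f ys (f y S)" using fold_incr[of ys f] Cons.prems(4) by simp
    then show ?thesis using q Cons.prems(3) by simp
  next
    case False
    then have "x \<in> set ys" using Cons.prems(1) by simp
    then show ?thesis using Cons by simp
  qed
qed

definition LE :: "('tx \<Rightarrow> 'tx \<Rightarrow> bool) \<Rightarrow> 'tx set list \<Rightarrow> ('tx \<times> 'tx) set" where
  "LE conf Bs = {(u, v). conf u v \<and> (\<exists>i j. j < i \<and> i \<le> length Bs \<and> u \<in> level_block Bs j \<and> v \<in> level_block Bs i)}"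

lemma level_step_incr: "S \<subseteq> level_step conf Bs i j S"
  unfolding level_step_def by blast

lemma inner_incr: "S \<subseteq> fold (\<lambda>j S. level_step conf Bs i j S) js S"
  by (rule fold_incr) (simp add: level_step_incr)

lemma LS_upper: "LevelSchedule conf Bs \<subseteq> LE conf Bs"
  unfolding LevelSchedule_def
proof (rule fold_inv[where P="\<lambda>S. S \<subseteq> LE conf Bs"])
  show "{} \<subseteq> LE conf Bs" by simp
  show "\<forall>i\<in>set [1..<length Bs + 1]. \<forall>S. S \<subseteq> LE conf Bs \<longrightarrow>
      fold (\<lambda>j S. level_step conf Bs i j S) (rev [0..<i]) S \<subseteq> LE conf Bs"
  proof (intro ballI allI impI)
    fix i S assume i: "i \<in> set [1..<length Bs + 1]" and S: "S \<subseteq> LE conf Bs"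
    show "fold (\<lambda>j S. level_step conf Bs i j S) (rev [0..<i]) S \<subseteq> LE conf Bs"
    proof (rule fold_inv[where P="\<lambda>S. S \<subseteq> LE conf Bs"])
      show "S \<subseteq> LE conf Bs" using S .
      show "\<forall>j\<in>set (rev [0..<i]). \<forall>S. S \<subseteq> LE conf Bs \<longrightarrow> level_step conf Bs i j S \<subseteq> LE conf Bs"
      proof (intro ballI allI impI)
        fix j S assume j: "j \<in> set (rev [0..<i])" and S: "S \<subseteq> LE conf Bs"
        have ji: "j < i" "i \<le> length Bs" using i j by auto
        show "level_step conf Bs i j S \<subseteq> LE conf Bs"
          unfolding level_step_def using S ji unfolding LE_def by blast
      qed
    qed
  qed
qed

lemma LS_lower:
  assumes ji: "j < i" "i \<le> length Bs" and u: "u \<in> level_block Bs j" and v: "v \<in> level_block Bs i"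
    and c: "conf u v"
  shows "(u, v) \<in> (LevelSchedule conf Bs)\<^sup>+"
  unfolding LevelSchedule_def
proof (rule fold_reach[where x=i])
  show "i \<in> set [1..<length Bs + 1]" using ji by auto
  show "\<forall>S S'. (u, v) \<in> S\<^sup>+ \<longrightarrow> S \<subseteq> S' \<longrightarrow> (u, v) \<in> S'\<^sup>+" using trancl_mono by blast
  show "\<forall>y\<in>set [1..<length Bs + 1]. \<forall>S. S \<subseteq> fold (\<lambda>j S. level_step conf Bs y j S) (rev [0..<y]) S"
    using inner_incr by blast
  show "\<forall>S. (u, v) \<in> (fold (\<lambda>j S. level_step conf Bs i j S) (rev [0..<i]) S)\<^sup>+"
  proof
    fix S
    show "(u, v) \<in> (fold (\<lambda>j S. level_step conf Bs i j S) (rev [0..<i]) S)\<^sup>+"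
    proof (rule fold_reach[where x=j])
      show "j \<in> set (rev [0..<i])" using ji by simp
      show "\<forall>S S'. (u, v) \<in> S\<^sup>+ \<longrightarrow> S \<subseteq> S' \<longrightarrow> (u, v) \<in> S'\<^sup>+" using trancl_mono by blast
      show "\<forall>y\<in>set (rev [0..<i]). \<forall>S. S \<subseteq> level_step conf Bs i y S"
        using level_step_incr by blast
      show "\<forall>S. (u, v) \<in> (level_step conf Bs i j S)\<^sup>+"
      proof
        fix S
        show "(u, v) \<in> (level_step conf Bs i j S)\<^sup>+"
        proof (cases "(u, v) \<in> S\<^sup>+")
          case True
          then show ?thesis using trancl_mono[OF True level_step_incr] by simp
        next
          case False
          then have "(u, v) \<in> level_step conf Bs i j S" unfolding level_step_def using u v c by blast
          then show ?thesis by (rule r_into_trancl)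
        qed
      qed
    qed
  qed
qed

lemma level_block_single:
  "1 \<le> i \<Longrightarrow> i \<le> length xs \<Longrightarrow> level_block (map (\<lambda>x. {x}) xs) i = {xs ! (i - 1)}"
  unfolding level_block_def by simp

lemma LS_single_upper:
  assumes "(u, v) \<in> LevelSchedule conf (map (\<lambda>x. {x}) xs)"
  shows "conf u v \<and> (\<exists>a b. a < b \<and> b < length xs \<and> u = xs ! a \<and> v = xs ! b)"
proof -
  have "(u, v) \<in> LE conf (map (\<lambda>x. {x}) xs)" using LS_upper assms by blast
  then obtain i j where c: "conf u v" and ji: "j < i" "i \<le> length xs"
    and u: "u \<in> level_block (map (\<lambda>x. {x}) xs) j" and v: "v \<in> level_block (map (\<lambda>x. {x}) xs) i"
    unfolding LE_def by auto
  have j1: "1 \<le> j" using u unfolding level_block_def by (cases "j = 0") auto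
  have "j \<le> length xs" using ji by simp
  then have "u = xs ! (j - 1)" using u level_block_single[OF j1, of xs] by simp
  moreover have "v = xs ! (i - 1)" using v level_block_single[of i xs] ji j1 by simp
  moreover have "j - 1 < i - 1" "i - 1 < length xs" using ji j1 by auto
  ultimately show ?thesis using c by blast
qed

lemma LS_single_lower:
  assumes ab: "a < b" "b < length xs" and c: "conf (xs ! a) (xs ! b)"
  shows "(xs ! a, xs ! b) \<in> (LevelSchedule conf (map (\<lambda>x. {x}) xs))\<^sup>+"
proof (rule LS_lower[where j="Suc a" and i="Suc b"])
  show "Suc a < Suc b" "Suc b \<le> length (map (\<lambda>x. {x}) xs)" using ab by auto
  show "xs ! a \<in> level_block (map (\<lambda>x. {x}) xs) (Suc a)" using ab level_block_single[of "Suc a" xs] by simp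
  show "xs ! b \<in> level_block (map (\<lambda>x. {x}) xs) (Suc b)" using ab level_block_single[of "Suc b" xs] by simp
  show "conf (xs ! a) (xs ! b)" using c .
qed

lemma legal_single:
  assumes "distinct xs" "set xs = T"
  shows "legal_partition (conflict R W) T (map (\<lambda>x. {x}) xs)"
  unfolding legal_partition_def conflict_free_def conflict_def
  using assms by (auto simp: nth_eq_iff_index_eq)



lemma trancl_sub: "L \<subseteq> S\<^sup>+ \<Longrightarrow> L\<^sup>+ \<subseteq> S\<^sup>+"
proof
  fix p assume L: "L \<subseteq> S\<^sup>+" and p: "p \<in> L\<^sup>+"
  have "p \<in> (S\<^sup>+)\<^sup>+" using trancl_mono[OF p L] .
  then show "p \<in> S\<^sup>+" using trancl_id[OF trans_trancl[of S]] by simp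
qed

lemma trancl_list: "(a, b) \<in> S\<^sup>+ \<Longrightarrow> \<exists>c. c \<noteq> [] \<and> hd c = a \<and> successively (\<lambda>x y. (x, y) \<in> S) (c @ [b])"
proof (induction rule: trancl_induct)
  case (base y)
  then show ?case by (intro exI[of _ "[a]"]) simp
next
  case (step y z)
  then obtain c where c: "c \<noteq> []" "hd c = a" "successively (\<lambda>x y. (x, y) \<in> S) (c @ [y])" by blast
  have "successively (\<lambda>x y. (x, y) \<in> S) ((c @ [y]) @ [z])"
    using c(3) step(2) by (simp add: successively_append_iff)
  then show ?case using c by (intro exI[of _ "c @ [y]"]) simp
qed

lemma chain_walk:
  "p \<noteq> [] \<Longrightarrow> successively (\<lambda>x y. (x, y) \<in> S\<^sup>+) p \<Longrightarrow>
   \<exists>w. w \<noteq> [] \<and> hd w = hd p \<and> successively (\<lambda>x y. (x, y) \<in> S) w \<and>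
       sum_list (map (len :: _ \<Rightarrow> nat) p) \<le> sum_list (map len w)"
proof (induction p)
  case Nil then show ?case by simp
next
  case (Cons a r)
  show ?case
  proof (cases r)
    case Nil
    then show ?thesis by (intro exI[of _ "[a]"]) simp
  next
    case (Cons b r')
    have ab: "(a, b) \<in> S\<^sup>+" and sr: "successively (\<lambda>x y. (x, y) \<in> S\<^sup>+) r"
      using Cons.prems(2) Cons by auto
    obtain w' where w': "w' \<noteq> []" "hd w' = b" "successively (\<lambda>x y. (x, y) \<in> S) w'"
      "sum_list (map len r) \<le> sum_list (map len w')"
      using Cons.IH[OF _ sr] Cons by auto
    obtain c where c: "c \<noteq> []" "hd c = a" "successively (\<lambda>x y. (x, y) \<in> S) (c @ [b])"
      using trancl_list[OF ab] by blast
    have sc: "successively (\<lambda>x y. (x, y) \<in> S) c" and lc: "(last c, b) \<in> S"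
      using c(1,3) by (auto simp: successively_append_iff)
    have sw: "successively (\<lambda>x y. (x, y) \<in> S) (c @ w')"
      using sc w' lc by (simp add: successively_append_iff)
    have "len a \<le> sum_list (map len c)" using c(1,2) by (cases c) auto
    then have "sum_list (map len (a # r)) \<le> sum_list (map len (c @ w'))" using w'(4) by simp
    then show ?thesis using sw c by (intro exI[of _ "c @ w'"]) simp
  qed
qed

lemma succ_trancl:
  assumes s: "successively (\<lambda>x y. (x, y) \<in> S) w"
  shows "i < j \<Longrightarrow> j < length w \<Longrightarrow> (w ! i, w ! j) \<in> S\<^sup>+"
proof (induction j)
  case 0 then show ?case by simp
next
  case (Suc j)
  have st: "(w ! j, w ! Suc j) \<in> S" using successively_nth[OF s] Suc.prems by simp
  show ?case
  proof (cases "i = j")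
    case True then show ?thesis using st by simp
  next
    case False
    then have "(w ! i, w ! j) \<in> S\<^sup>+" using Suc by simp
    then show ?thesis using st by (rule trancl_into_trancl)
  qed
qed

lemma walk_path:
  assumes ac: "acyclic S" and ST: "S \<subseteq> T \<times> T" and ne: "w \<noteq> []" and hT: "hd w \<in> T"
    and s: "successively (\<lambda>x y. (x, y) \<in> S) w"
  shows "sched_path T S w"
  unfolding sched_path_def
proof (intro conjI)
  show "w \<noteq> []" using ne .
  show "distinct w" unfolding distinct_conv_nth
  proof (intro allI impI notI)
    fix i j assume i: "i < length w" and j: "j < length w" and ij: "i \<noteq> j" and eq: "w ! i = w ! j"
    have "(w ! min i j, w ! max i j) \<in> S\<^sup>+" using succ_trancl[OF s] i j ij by simp
    then have "(w ! i, w ! i) \<in> S\<^sup>+" using eq by (cases "i \<le> j") (auto simp: min_def max_def)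
    then show False using ac unfolding acyclic_def by blast
  qed
  show "set w \<subseteq> T"
  proof
    fix x assume "x \<in> set w"
    then obtain i where i: "i < length w" "w ! i = x" by (metis in_set_conv_nth)
    show "x \<in> T"
    proof (cases i)
      case 0 then show ?thesis using i hT ne by (simp add: hd_conv_nth)
    next
      case (Suc k)
      have "Suc k < length w" using i Suc by simp
      then have "(w ! k, w ! Suc k) \<in> S" using successively_nth[OF s] by blast
      then have "w ! Suc k \<in> T" using ST by blast
      then show ?thesis using i Suc by simp
    qed
  qed
  show "\<forall>i. Suc i < length w \<longrightarrow> (w ! i, w ! Suc i) \<in> S" using successively_nth[OF s] by blast
qed

lemma paths_finite:
  assumes fin: "finite T"
  shows "finite {p. sched_path T X p}"
proof (rule finite_subset)
  show "{p. sched_path T X p} \<subseteq> {xs. set xs \<subseteq> T \<and> length xs \<le> card T}"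
  proof
    fix p assume "p \<in> {p. sched_path T X p}"
    then have d: "distinct p" and sp: "set p \<subseteq> T" unfolding sched_path_def by auto
    have "length p = card (set p)" using distinct_card[OF d] by simp
    also have "\<dots> \<le> card T" using card_mono[OF fin sp] .
    finally show "p \<in> {xs. set xs \<subseteq> T \<and> length xs \<le> card T}" using sp by simp
  qed
  show "finite {xs. set xs \<subseteq> T \<and> length xs \<le> card T}" using finite_lists_length_le[OF fin] .
qed

lemma latency_le:
  assumes fin: "finite T" and ac: "acyclic S" and ST: "S \<subseteq> T \<times> T" and LS: "L \<subseteq> S\<^sup>+"
  shows "latency T len L \<le> latency T len S"
proof (cases "T = {}")
  case True
  have "\<And>X. {sum_list (map len p) |p. sched_path T X p} = {}"
    using True unfolding sched_path_def by auto
  then show ?thesis unfolding latency_def by simp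
next
  case False
  then obtain t where t: "t \<in> T" by blast
  have eqL: "{sum_list (map len p) |p. sched_path T L p} = (\<lambda>p. sum_list (map len p)) ` {p. sched_path T L p}" by blast
  have eqS: "{sum_list (map len p) |p. sched_path T S p} = (\<lambda>p. sum_list (map len p)) ` {p. sched_path T S p}" by blast
  have fL: "finite {sum_list (map len p) |p. sched_path T L p}" using eqL paths_finite[OF fin] by simp
  have fS: "finite {sum_list (map len p) |p. sched_path T S p}" using eqS paths_finite[OF fin] by simp
  have "sched_path T L [t]" using t unfolding sched_path_def by simp
  then have neL: "{sum_list (map len p) |p. sched_path T L p} \<noteq> {}" by blast
  have "Max {sum_list (map len p) |p. sched_path T L p} \<in> {sum_list (map len p) |p. sched_path T L p}"
    using Max_in[OF fL neL] .
  then obtain p where p: "sched_path T L p" and mp: "latency T len L = sum_list (map len p)"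
    unfolding latency_def by auto
  have pne: "p \<noteq> []" and pT: "set p \<subseteq> T" using p unfolding sched_path_def by auto
  have "successively (\<lambda>x y. (x, y) \<in> L) p" using p unfolding sched_path_def successively_conv_nth by blast
  then have "successively (\<lambda>x y. (x, y) \<in> S\<^sup>+) p"
    by (rule successively_mono) (use LS in blast)
  then obtain w where w: "w \<noteq> []" "hd w = hd p" "successively (\<lambda>x y. (x, y) \<in> S) w"
    "sum_list (map len p) \<le> sum_list (map len w)"
    using chain_walk[OF pne] by blast
  have "hd w \<in> T" using w(2) pne pT by (simp add: subset_iff)
  then have "sched_path T S w" using walk_path[OF ac ST w(1) _ w(3)] by simp
  then have "sum_list (map len w) \<le> latency T len S"
    unfolding latency_def using fS by (intro Max_ge) auto
  then show ?thesis using mp w(4) by simp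
qed



lemma topo:
  assumes "finite A" and ac: "acyclic S"
  shows "\<exists>xs. distinct xs \<and> set xs = A \<and>
           (\<forall>i j. i < length xs \<longrightarrow> j < length xs \<longrightarrow> (xs ! i, xs ! j) \<in> S \<longrightarrow> i < j)"
  using assms(1)
proof (induction A rule: finite_psubset_induct)
  case (psubset A)
  show ?case
  proof (cases "A = {}")
    case True
    then show ?thesis by (intro exI[of _ "[]"]) simp
  next
    case False
    then obtain a where a: "a \<in> A" by blast
    let ?R = "S \<inter> A \<times> A"
    have "finite ?R" using psubset(1) by simp
    moreover have "acyclic ?R" using acyclic_subset[OF ac] by blast
    ultimately have "wf (?R\<inverse>)" by (rule finite_acyclic_wf_converse)
    then obtain m where m: "m \<in> A" and mm: "\<And>y. (y, m) \<in> ?R\<inverse> \<Longrightarrow> y \<notin> A"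
      using wfE_min[of "?R\<inverse>" a A] a by blast
    have nom: "\<And>y. y \<in> A \<Longrightarrow> (m, y) \<notin> S" using mm m by blast
    have sub: "A - {m} \<subset> A" using m by blast
    obtain ys where ys: "distinct ys" "set ys = A - {m}"
      "\<forall>i j. i < length ys \<longrightarrow> j < length ys \<longrightarrow> (ys ! i, ys ! j) \<in> S \<longrightarrow> i < j"
      using psubset(2)[OF sub] by blast
    define xs where "xs = ys @ [m]"
    have "distinct xs" "set xs = A" using ys m unfolding xs_def by auto
    moreover have "\<forall>i j. i < length xs \<longrightarrow> j < length xs \<longrightarrow> (xs ! i, xs ! j) \<in> S \<longrightarrow> i < j"
    proof (intro allI impI)
      fix i j assume i: "i < length xs" and j: "j < length xs" and e: "(xs ! i, xs ! j) \<in> S"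
      have xjA: "xs ! j \<in> A" using j \<open>set xs = A\<close> nth_mem by blast
      show "i < j"
      proof (cases "i = length ys")
        case True
        then have "xs ! i = m" unfolding xs_def by simp
        then show ?thesis using nom[OF xjA] e by simp
      next
        case False
        then have il: "i < length ys" using i unfolding xs_def by simp
        show ?thesis
        proof (cases "j = length ys")
          case True then show ?thesis using il by simp
        next
          case False
          then have jl: "j < length ys" using j unfolding xs_def by simp
          have "(ys ! i, ys ! j) \<in> S" using e il jl unfolding xs_def by (simp add: nth_append)
          then show ?thesis using ys(3) il jl by blast
        qed
      qed
    qed
    ultimately show ?thesis by blast
  qed
qed



theorem theorem3:
  fixes T :: "'tx set" and R W :: "'tx \<Rightarrow> 'o set"
    and res :: "'tx \<Rightarrow> ('o \<Rightarrow> 'v) \<Rightarrow> 'r" and wr :: "'tx \<Rightarrow> ('o \<Rightarrow> 'v) \<Rightarrow> ('o \<Rightarrow> 'v)"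
    and len :: "'tx \<Rightarrow> nat" and S :: "('tx \<times> 'tx) set"
  assumes "wf_block T R W res wr len"
    and "valid_schedule T (conflict R W) S"
  shows "\<exists>Bs. legal_partition (conflict R W) T Bs \<and>
           is_schedule T (LevelSchedule (conflict R W) Bs) \<and>
           equivalent_schedules T W res wr (LevelSchedule (conflict R W) Bs) S \<and>
           latency T len (LevelSchedule (conflict R W) Bs) \<le> latency T len S"
proof -
  note wf = assms(1) and vS = assms(2)
  have fin: "finite T" using wf unfolding wf_block_def by simp
  have ST: "S \<subseteq> T \<times> T" and ac: "acyclic S" using vS unfolding valid_schedule_def is_schedule_def by auto
  have vc: "\<And>a b. a \<in> T \<Longrightarrow> b \<in> T \<Longrightarrow> conflict R W a b \<Longrightarrow> (a, b) \<in> S\<^sup>+ \<or> (b, a) \<in> S\<^sup>+"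
    using vS unfolding valid_schedule_def by blast
  obtain xs where d: "distinct xs" and sx: "set xs = T"
    and tp: "\<forall>i j. i < length xs \<longrightarrow> j < length xs \<longrightarrow> (xs ! i, xs ! j) \<in> S \<longrightarrow> i < j"
    using topo[OF fin ac] by blast
  have pS: "pos xs a < pos xs b" if "(a, b) \<in> S" for a b
  proof -
    have "a \<in> set xs" "b \<in> set xs" using that ST sx by auto
    then show ?thesis using tp pos_lt[of a xs] pos_nth[of a xs] pos_lt[of b xs] pos_nth[of b xs] that by simp
  qed
  have pSp: "pos xs a < pos xs b" if "(a, b) \<in> S\<^sup>+" for a b
    using that
  proof (induction rule: trancl_induct)
    case (base y) then show ?case using pS by simp
  next
    case (step y z) then show ?case using pS[of y z] by simp
  qed
  define Bs where "Bs = map (\<lambda>x. {x}) xs"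
  define L where "L = LevelSchedule (conflict R W) Bs"
  have LS: "L \<subseteq> S\<^sup>+"
  proof
    fix e assume "e \<in> L"
    then obtain u v where e: "e = (u, v)" and uv: "(u, v) \<in> L" by (cases e) auto
    obtain a b where c: "conflict R W u v" and ab: "a < b" "b < length xs" "u = xs ! a" "v = xs ! b"
      using LS_single_upper[of u v "conflict R W" xs] uv unfolding L_def Bs_def by blast
    have al: "a < length xs" using ab by simp
    have uT: "u \<in> T" and vT: "v \<in> T" using ab sx nth_mem[OF al] nth_mem[OF ab(2)] by auto
    have pu: "pos xs u = a" using pos_of_nth[OF d al] ab by simp
    have pv: "pos xs v = b" using pos_of_nth[OF d ab(2)] ab by simp
    have "(v, u) \<notin> S\<^sup>+"
    proof
      assume "(v, u) \<in> S\<^sup>+"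
      then have "pos xs v < pos xs u" by (rule pSp)
      then show False using pu pv ab by simp
    qed
    then show "e \<in> S\<^sup>+" using vc[OF uT vT c] e by simp
  qed
  have low: "(u, v) \<in> L\<^sup>+" if uT: "u \<in> T" and vT: "v \<in> T" and c: "conflict R W u v" and uv: "(u, v) \<in> S\<^sup>+" for u v
  proof -
    have "pos xs u < pos xs v" using pSp[OF uv] .
    moreover have "pos xs v < length xs" using pos_lt[of v xs] vT sx by simp
    moreover have "xs ! pos xs u = u" "xs ! pos xs v = v" using pos_nth[of u xs] pos_nth[of v xs] uT vT sx by simp_all
    ultimately show ?thesis using LS_single_lower[of "pos xs u" "pos xs v" xs "conflict R W"] c
      unfolding L_def Bs_def by simp
  qed
  have LT: "L \<subseteq> T \<times> T" using LS trancl_subset_Sigma[OF ST] by blast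
  have acL: "acyclic L" using trancl_sub[OF LS] ac unfolding acyclic_def by blast
  have isL: "is_schedule T L" unfolding is_schedule_def using LT acL by simp
  have vL: "valid_schedule T (conflict R W) L"
    unfolding valid_schedule_def
  proof (intro conjI ballI impI)
    show "is_schedule T L" using isL .
    fix a b assume aT: "a \<in> T" and bT: "b \<in> T" and c: "conflict R W a b"
    have c': "conflict R W b a" using c unfolding conflict_def by blast
    show "(a, b) \<in> L\<^sup>+ \<or> (b, a) \<in> L\<^sup>+" using vc[OF aT bT c] low[OF aT bT c] low[OF bT aT c'] by blast
  qed
  have agree: "\<forall>a\<in>T. \<forall>b\<in>T. conflict R W a b \<longrightarrow> ((a, b) \<in> L\<^sup>+ \<longleftrightarrow> (a, b) \<in> S\<^sup>+)"
    using low trancl_sub[OF LS] by blast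
  have eq: "equivalent_schedules T W res wr L S" using equiv_sched[OF wf vL vS agree] .
  have lat: "latency T len L \<le> latency T len S" using latency_le[OF fin ac ST LS] .
  have lp: "legal_partition (conflict R W) T Bs" unfolding Bs_def using legal_single[OF d sx] .
  show ?thesis using lp isL eq lat unfolding L_def by blast
qed

end
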